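(* Let $D$ be a digraph with $\mathrm{ddp}(D)=k$. Then there exists a valid DAG-depth decomposition of $D$ of depth $k$.
   Context: A reachable fragment of a digraph $D$ is a vertex set $R\subseteq V(D)$, maximal by inclusion, that contains a vertex from which every vertex of $R$ is reachable by a directed path in $D$; it is regarded as the induced subdigraph $D[R]$. The DAG-depth $\mathrm{ddp}(D)$ is defined recursively: $\mathrm{ddp}(D)=1$ if $|V(D)|=1$; if $D$ has exactly one reachable fragment and $|V(D)|>1$, then $\mathrm{ddp}(D)=1+\min_{v\in V(D)}\mathrm{ddp}(D-v)$; otherwise, with reachable fragments $R_1,\dots,R_p$, $\mathrm{ddp}(D)=\max_i\mathrm{ddp}(D[R_i])$. A DAG-depth decomposition of $D$ is a pair $(P,\mathrm{org})$ with $P$ a directed acyclic graph and $\mathrm{org}:V(P)\to V(D)$ surjective. Roots of $P$ are vertices of indegree $0$; $w'$ is a descendant of $v'$ if $P$ has a directed path from $v'$ to $w'$. The depth of $P$ is the maximum number of vertices on a directed path in $P$. The decomposition is valid if for every $v'\in V(P)$ with $\mathrm{org}(v')=v$ and every $u\in N^+_D(v)$, either (1) some $u'$ with $\mathrm{org}(u')=u$ is a descendant of $v'$ in $P$, or (2) every directed path in $P$ from a root of $P$ to $v'$ contains a vertex $u'$ with $\mathrm{org}(u')=u$. *)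

theory Defs
  imports Main
begin

text \<open>A digraph is a finite vertex set V together with an arc relation E \<subseteq> V \<times> V.\<close>

definition restr :: "('a \<times> 'a) set \<Rightarrow> 'a set \<Rightarrow> ('a \<times> 'a) set" where
  "restr E R = E \<inter> (R \<times> R)"

definition rooted_in :: "'a set \<Rightarrow> ('a \<times> 'a) set \<Rightarrow> 'a set \<Rightarrow> bool" where
  "rooted_in V E R \<longleftrightarrow> R \<subseteq> V \<and> (\<exists>r\<in>R. \<forall>x\<in>R. (r, x) \<in> (restr E V)\<^sup>*)"

definition fragments :: "'a set \<Rightarrow> ('a \<times> 'a) set \<Rightarrow> 'a set set" where
  "fragments V E = {R. rooted_in V E R \<and> (\<forall>R'. rooted_in V E R' \<and> R \<subseteq> R' \<longrightarrow> R' = R)}"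

lemma fragment_proper:
  assumes "R \<in> fragments V E" "card (fragments V E) \<noteq> 1"
  shows "R \<subset> V"
proof -
  have "R \<subseteq> V" using assms(1) by (auto simp: fragments_def rooted_in_def)
  moreover have "R \<noteq> V"
  proof
    assume RV: "R = V"
    have "fragments V E = {R}"
    proof
      show "fragments V E \<subseteq> {R}"
      proof
        fix R' assume "R' \<in> fragments V E"
        then have "R' \<subseteq> V" "\<forall>R''. rooted_in V E R'' \<and> R' \<subseteq> R'' \<longrightarrow> R'' = R'"
          by (auto simp: fragments_def rooted_in_def)
        moreover have "rooted_in V E R" using assms(1) by (simp add: fragments_def)
        ultimately show "R' \<in> {R}" using RV by auto
      qed
    qed (use assms(1) in auto)
    then show False using assms(2) by simp
  qed
  ultimately show ?thesis by auto
qed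

function ddp :: "'a set \<Rightarrow> ('a \<times> 'a) set \<Rightarrow> nat" where
  "ddp V E =
    (if \<not> finite V \<or> V = {} then 0
     else if card V = 1 then 1
     else if card (fragments V E) = 1
       then 1 + Min ((\<lambda>v. ddp (V - {v}) (restr E (V - {v}))) ` V)
     else Max ((\<lambda>R. ddp R (restr E R)) ` fragments V E))"
  by pat_completeness auto
termination
proof (relation "measure (\<lambda>(V, E). card V)")
  show "wf (measure (\<lambda>(V, E). card V))" by simp
next
  fix V :: "'a set" and E v
  assume "\<not> (\<not> finite V \<or> V = {})" "v \<in> V"
  then show "((V - {v}, restr E (V - {v})), V, E) \<in> measure (\<lambda>(V, E). card V)"
    by (simp add: card_gt_0_iff)
next
  fix V :: "'a set" and E R
  assume "\<not> (\<not> finite V \<or> V = {})" "card (fragments V E) \<noteq> 1" "R \<in> fragments V E"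
  then show "((R, restr E R), V, E) \<in> measure (\<lambda>(V, E). card V)"
    using fragment_proper[of R V E] by (simp add: psubset_card_mono)
qed

definition dpath :: "('b \<times> 'b) set \<Rightarrow> 'b list \<Rightarrow> bool" where
  "dpath A xs \<longleftrightarrow> xs \<noteq> [] \<and> (\<forall>i. Suc i < length xs \<longrightarrow> (xs ! i, xs ! Suc i) \<in> A)"

definition is_root :: "'b set \<Rightarrow> ('b \<times> 'b) set \<Rightarrow> 'b \<Rightarrow> bool" where
  "is_root VP A x \<longleftrightarrow> x \<in> VP \<and> (\<forall>y. (y, x) \<notin> A)"

definition descendant :: "('b \<times> 'b) set \<Rightarrow> 'b \<Rightarrow> 'b \<Rightarrow> bool" where
  "descendant A v' w' \<longleftrightarrow> (\<exists>xs. dpath A xs \<and> hd xs = v' \<and> last xs = w')"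

definition dag :: "'b set \<Rightarrow> ('b \<times> 'b) set \<Rightarrow> bool" where
  "dag VP A \<longleftrightarrow> finite VP \<and> A \<subseteq> VP \<times> VP \<and> acyclic A"

definition depth :: "'b set \<Rightarrow> ('b \<times> 'b) set \<Rightarrow> nat \<Rightarrow> bool" where
  "depth VP A k \<longleftrightarrow> (\<exists>xs. dpath A xs \<and> set xs \<subseteq> VP \<and> length xs = k)
                   \<and> (\<forall>xs. dpath A xs \<and> set xs \<subseteq> VP \<longrightarrow> length xs \<le> k)"

definition valid_decomp ::
  "'a set \<Rightarrow> ('a \<times> 'a) set \<Rightarrow> 'b set \<Rightarrow> ('b \<times> 'b) set \<Rightarrow> ('b \<Rightarrow> 'a) \<Rightarrow> bool" where
  "valid_decomp V E VP A org \<longleftrightarrow>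
     dag VP A \<and> org ` VP = V \<and>
     (\<forall>v'\<in>VP. \<forall>u. (org v', u) \<in> E \<longrightarrow>
        (\<exists>u'\<in>VP. org u' = u \<and> descendant A v' u') \<or>
        (\<forall>xs. dpath A xs \<and> is_root VP A (hd xs) \<and> last xs = v' \<longrightarrow>
              (\<exists>u'\<in>set xs. org u' = u)))"

end

theory Submission
  imports Defs "HOL-Library.Nat_Bijection"
begin

lemma dpath_Cons:
  "dpath A (x # xs) \<longleftrightarrow> xs = [] \<or> ((x, hd xs) \<in> A \<and> dpath A xs)"
proof (cases xs)
  case Nil
  then show ?thesis by (simp add: dpath_def)
next
  case (Cons y ys)
  have "(\<forall>i. Suc i < length (x#y#ys) \<longrightarrow> ((x#y#ys) ! i, (x#y#ys) ! Suc i) \<in> A)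
     \<longleftrightarrow> (x,y) \<in> A \<and> (\<forall>i. Suc i < length (y#ys) \<longrightarrow> ((y#ys) ! i, (y#ys) ! Suc i) \<in> A)"
  proof safe
    fix i assume "\<forall>i. Suc i < length (x#y#ys) \<longrightarrow> ((x#y#ys) ! i, (x#y#ys) ! Suc i) \<in> A"
    from spec[OF this, of 0] show "(x,y) \<in> A" by simp
  next
    fix i assume "\<forall>i. Suc i < length (x#y#ys) \<longrightarrow> ((x#y#ys) ! i, (x#y#ys) ! Suc i) \<in> A"
      "Suc i < length (y#ys)"
    from spec[OF this(1), of "Suc i"] this(2) show "((y#ys) ! i, (y#ys) ! Suc i) \<in> A"
      by simp
  next
    fix i assume "(x,y) \<in> A" "\<forall>i. Suc i < length (y#ys) \<longrightarrow> ((y#ys) ! i, (y#ys) ! Suc i) \<in> A"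
      "Suc i < length (x#y#ys)"
    then show "((x#y#ys) ! i, (x#y#ys) ! Suc i) \<in> A"
      by (cases i) auto
  qed
  then show ?thesis using Cons by (simp add: dpath_def)
qed

lemma dpath_single[simp]: "dpath A [x]"
  by (simp add: dpath_def)

lemma dpath_nonempty: "dpath A xs \<Longrightarrow> xs \<noteq> []"
  by (simp add: dpath_def)

lemma dpath_mono: "A \<subseteq> B \<Longrightarrow> dpath A xs \<Longrightarrow> dpath B xs"
  by (auto simp: dpath_def)

lemma dpath_tl_targets: "dpath A xs \<Longrightarrow> set (tl xs) \<subseteq> snd ` A"
proof (induction xs)
  case Nil then show ?case by simp
next
  case (Cons x xs)
  show ?case
  proof (cases xs)
    case Nil then show ?thesis by simp
  next
    case (Cons y ys)
    with Cons.prems have "(x,y) \<in> A" "dpath A xs" by (auto simp: dpath_Cons)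
    with Cons.IH Cons show ?thesis by force
  qed
qed

lemma set_hd_tl: "xs \<noteq> [] \<Longrightarrow> set xs = insert (hd xs) (set (tl xs))"
  by (cases xs) auto

lemma rtrancl_descendant: "(a,b) \<in> A\<^sup>* \<Longrightarrow> descendant A a b"
proof (induction rule: converse_rtrancl_induct)
  case base
  show ?case unfolding descendant_def by (rule exI[of _ "[b]"]) simp
next
  case (step a c)
  then obtain xs where xs: "dpath A xs" "hd xs = c" "last xs = b"
    unfolding descendant_def by blast
  then have ne: "xs \<noteq> []" by (simp add: dpath_def)
  have "dpath A (a # xs)" using xs ne step by (simp add: dpath_Cons)
  then show ?case unfolding descendant_def using xs ne
    by (intro exI[of _ "a # xs"]) simp
qed

lemma descendant_mono: "A \<subseteq> B \<Longrightarrow> descendant A a b \<Longrightarrow> descendant B a b"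
  unfolding descendant_def using dpath_mono by blast

lemma root_exists:
  assumes "dag VP A" "x \<in> VP"
  shows "\<exists>\<rho>. is_root VP A \<rho> \<and> (\<rho>, x) \<in> A\<^sup>*"
proof -
  have fin: "finite A" using assms(1) unfolding dag_def
    by (meson finite_SigmaI finite_subset)
  have "wf A" using fin assms(1) finite_acyclic_wf unfolding dag_def by blast
  then show ?thesis using assms(2)
  proof (induction x rule: wf_induct_rule)
    case (less x)
    show ?case
    proof (cases "is_root VP A x")
      case True then show ?thesis by blast
    next
      case False
      then obtain y where y: "(y,x) \<in> A" using less.prems unfolding is_root_def by blast
      then have "y \<in> VP" using assms(1) unfolding dag_def by blast
      with less.IH y obtain \<rho> where "is_root VP A \<rho>" "(\<rho>, y) \<in> A\<^sup>*" by blast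
      then show ?thesis using y by (meson rtrancl.rtrancl_into_rtrancl)
    qed
  qed
qed

lemma trivial_cond:
  "dpath A xs \<Longrightarrow> last xs = v' \<Longrightarrow> \<exists>u'\<in>set xs. org u' = org v'"
  using dpath_nonempty last_in_set by blast


section \<open>Adding a new root\<close>

lemma add_root:
  assumes val: "valid_decomp W E' VP' A' org'" and dep: "depth VP' A' k'"
    and r: "r \<notin> VP'" and v: "v \<notin> W"
    and E: "E \<subseteq> insert v W \<times> insert v W" and E': "E' = restr E W"
  defines "A \<equiv> A' \<union> {(r, x) | x. is_root VP' A' x}"
  shows "\<exists>A org. valid_decomp (insert v W) E (insert r VP') A org \<and> depth (insert r VP') A (Suc k')"
proof -
  have dag': "dag VP' A'" and surj': "org' ` VP' = W" using val by (auto simp: valid_decomp_def)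
  have A'sub: "A' \<subseteq> VP' \<times> VP'" using dag' by (simp add: dag_def)
  have Asub: "A \<subseteq> insert r VP' \<times> insert r VP'" using A'sub unfolding A_def is_root_def by auto
  have tgt: "snd ` A \<subseteq> VP'" using A'sub unfolding A_def is_root_def by auto
  have tgt_ne: "snd p \<noteq> r" if "p \<in> A" for p using tgt that r by auto
  define org where "org = org'(r := v)"
  have org_eq: "org x = org' x" if "x \<in> VP'" for x using that r by (auto simp: org_def)
  have to_A': "dpath A' xs \<and> set xs \<subseteq> VP'" if "dpath A xs" "hd xs \<in> VP'" for xs
    using that
  proof (induction xs)
    case Nil then show ?case by (simp add: dpath_def)
  next
    case (Cons x xs)
    show ?case
    proof (cases xs)
      case Nil then show ?thesis using Cons by simp
    next
      case (Cons y ys)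
      with Cons.prems have xy: "(x,y) \<in> A" "dpath A xs" by (auto simp: dpath_Cons)
      have "x \<noteq> r" using Cons.prems r by auto
      then have "(x,y) \<in> A'" using xy unfolding A_def by auto
      then have "y \<in> VP'" using A'sub by auto
      then have "dpath A' xs \<and> set xs \<subseteq> VP'" using Cons.IH xy Cons by simp
      then show ?thesis using Cons.prems \<open>(x,y) \<in> A'\<close> Cons by (auto simp: dpath_Cons)
    qed
  qed
  have roots: "x = r" if "is_root (insert r VP') A x" for x
  proof (rule ccontr)
    assume "x \<noteq> r"
    then have x: "x \<in> VP'" using that by (simp add: is_root_def)
    show False
    proof (cases "is_root VP' A' x")
      case True then have "(r,x) \<in> A" unfolding A_def by auto
      then show False using that by (simp add: is_root_def)
    next
      case False
      then obtain y where "(y,x) \<in> A'" using x by (auto simp: is_root_def)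
      then show False using that unfolding A_def is_root_def by auto
    qed
  qed
  have r_root_path: "\<exists>ys. xs = r # ys \<and> dpath A' ys \<and> is_root VP' A' (hd ys) \<and> set ys \<subseteq> VP'"
    if "dpath A xs" "hd xs = r" "last xs \<noteq> r" for xs
  proof -
    define ys where "ys = tl xs"
    have xs: "xs = r # ys" using that dpath_nonempty[OF that(1)] unfolding ys_def by (cases xs) auto
    have ne: "ys \<noteq> []" using that xs by auto
    have a: "(r, hd ys) \<in> A" "dpath A ys" using that(1) xs ne by (auto simp: dpath_Cons)
    have "(r, hd ys) \<notin> A'" using A'sub r by auto
    then have root: "is_root VP' A' (hd ys)" using a unfolding A_def by auto
    then have "hd ys \<in> VP'" by (simp add: is_root_def)
    then show ?thesis using to_A' a xs root by blast
  qed
  have acyc: "acyclic A"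
  proof -
    have "y \<noteq> r \<and> ((x,y) \<in> A'\<^sup>+ \<or> x = r)" if "(x,y) \<in> A\<^sup>+" for x y
      using that
    proof (induction rule: trancl_induct)
      case (base y)
      then show ?case using tgt_ne[OF base] unfolding A_def by auto
    next
      case (step y z)
      have "z \<noteq> r" using tgt_ne[OF step(2)] by simp
      moreover have "(y,z) \<in> A'" using step unfolding A_def by auto
      ultimately show ?case using step by (meson trancl.trancl_into_trancl r_into_trancl')
    qed
    moreover have "acyclic A'" using dag' by (simp add: dag_def)
    ultimately show ?thesis unfolding acyclic_def by blast
  qed
  have dag: "dag (insert r VP') A"
    using dag' Asub acyc by (simp add: dag_def)
  have valid: "valid_decomp (insert v W) E (insert r VP') A org"
    unfolding valid_decomp_def
  proof (intro conjI ballI allI impI)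
    show "dag (insert r VP') A" by fact
    have "org ` VP' = W" using surj' org_eq by (metis image_cong)
    moreover have "org r = v" by (simp add: org_def)
    ultimately show "org ` insert r VP' = insert v W" by (simp only: image_insert)
  next
    fix v' u assume v'in: "v' \<in> insert r VP'" and e: "(org v', u) \<in> E"
    let ?C2 = "\<forall>xs. dpath A xs \<and> is_root (insert r VP') A (hd xs) \<and> last xs = v' \<longrightarrow>
              (\<exists>u'\<in>set xs. org u' = u)"
    let ?C1 = "\<exists>u'\<in>insert r VP'. org u' = u \<and> descendant A v' u'"
    show "?C1 \<or> ?C2"
    proof (cases "u = v")
      case True
      have ?C2
      proof (intro allI impI)
        fix xs assume "dpath A xs \<and> is_root (insert r VP') A (hd xs) \<and> last xs = v'"
        then have "hd xs = r" "xs \<noteq> []" using roots dpath_nonempty by auto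
        then show "\<exists>u'\<in>set xs. org u' = u" using True by (intro bexI[of _ r]) (auto simp: org_def)
      qed
      then show ?thesis ..
    next
      case False
      then have uW: "u \<in> W" using e E by auto
      show ?thesis
      proof (cases "v' = r")
        case True
        obtain u' where u': "u' \<in> VP'" "org' u' = u" using uW surj' by blast
        obtain \<rho> where \<rho>: "is_root VP' A' \<rho>" "(\<rho>, u') \<in> A'\<^sup>*" using root_exists[OF dag' u'(1)] by blast
        have "(r, \<rho>) \<in> A" using \<rho> unfolding A_def by auto
        moreover have "(\<rho>, u') \<in> A\<^sup>*" using \<rho>(2) rtrancl_mono[of A' A] unfolding A_def by auto
        ultimately have "(r, u') \<in> A\<^sup>*" by (meson converse_rtrancl_into_rtrancl)
        then have "descendant A v' u'" using True by (simp add: rtrancl_descendant)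
        moreover have "org u' = u" using org_eq[OF u'(1)] u'(2) by simp
        ultimately have ?C1 using u'(1) by blast
        then show ?thesis ..
      next
        case False
        then have v'VP: "v' \<in> VP'" using v'in by simp
        have "org' v' \<in> W" using surj' v'VP by auto
        then have e': "(org' v', u) \<in> E'" using e uW org_eq[OF v'VP] E' by (simp add: restr_def)
        then have "(\<exists>u'\<in>VP'. org' u' = u \<and> descendant A' v' u') \<or>
          (\<forall>xs. dpath A' xs \<and> is_root VP' A' (hd xs) \<and> last xs = v' \<longrightarrow> (\<exists>u'\<in>set xs. org' u' = u))"
          using val v'VP by (simp add: valid_decomp_def)
        then show ?thesis
        proof
          assume "\<exists>u'\<in>VP'. org' u' = u \<and> descendant A' v' u'"
          then have ?C1 using org_eq descendant_mono[of A' A] unfolding A_def by blast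
          then show ?thesis ..
        next
          assume H: "\<forall>xs. dpath A' xs \<and> is_root VP' A' (hd xs) \<and> last xs = v' \<longrightarrow> (\<exists>u'\<in>set xs. org' u' = u)"
          have ?C2
          proof (intro allI impI)
            fix xs assume xs: "dpath A xs \<and> is_root (insert r VP') A (hd xs) \<and> last xs = v'"
            then have "hd xs = r" using roots by auto
            then obtain ys where ys: "xs = r # ys" "dpath A' ys" "is_root VP' A' (hd ys)" "set ys \<subseteq> VP'"
              using r_root_path xs False by blast
            have "ys \<noteq> []" using ys(2) dpath_nonempty by auto
            then have "last ys = v'" using xs ys(1) by simp
            then obtain u' where "u' \<in> set ys" "org' u' = u" using H ys by blast
            then show "\<exists>u'\<in>set xs. org u' = u" using ys org_eq by auto
          qed
          then show ?thesis ..
        qed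
      qed
    qed
  qed
  have depth: "depth (insert r VP') A (Suc k')"
    unfolding depth_def
  proof (intro conjI allI impI)
    obtain xs where xs: "dpath A' xs" "set xs \<subseteq> VP'" "length xs = k'"
      using dep unfolding depth_def by blast
    have ne: "xs \<noteq> []" using xs dpath_nonempty by auto
    have root: "is_root VP' A' (hd xs)"
      unfolding is_root_def
    proof (intro conjI allI)
      show "hd xs \<in> VP'" using ne xs by auto
      fix y show "(y, hd xs) \<notin> A'"
      proof
        assume "(y, hd xs) \<in> A'"
        then have "dpath A' (y # xs)" "set (y # xs) \<subseteq> VP'" using xs ne A'sub by (auto simp: dpath_Cons)
        then have "length (y # xs) \<le> k'" using dep unfolding depth_def by blast
        then show False using xs by simp
      qed
    qed
    have "(r, hd xs) \<in> A" using root unfolding A_def by blast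
    moreover have "dpath A xs" using xs(1) dpath_mono[of A' A] unfolding A_def by blast
    ultimately have "dpath A (r # xs)" by (simp add: dpath_Cons)
    then show "\<exists>xs. dpath A xs \<and> set xs \<subseteq> insert r VP' \<and> length xs = Suc k'"
      using xs by (intro exI[of _ "r # xs"]) auto
  next
    fix xs assume xs: "dpath A xs \<and> set xs \<subseteq> insert r VP'"
    have ne: "xs \<noteq> []" using xs dpath_nonempty by auto
    show "length xs \<le> Suc k'"
    proof (cases "hd xs = r")
      case True
      show ?thesis
      proof (cases "last xs = r")
        case True
        have "set (tl xs) \<subseteq> VP'" using dpath_tl_targets[of A xs] xs tgt by auto
        then have "tl xs = []" using True ne r
          by (metis hd_Cons_tl last_ConsR last_in_set subsetD)
        then show ?thesis using ne by (cases xs) auto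
      next
        case False
        obtain ys where ys: "xs = r # ys" "dpath A' ys" "set ys \<subseteq> VP'"
          using r_root_path[of xs] xs True False by blast
        have "length ys \<le> k'" using dep ys(2,3) unfolding depth_def by blast
        then show ?thesis using ys(1) by simp
      qed
    next
      case False
      then have "hd xs \<in> VP'" using xs ne by (metis hd_in_set insertE subsetD)
      then have "dpath A' xs" "set xs \<subseteq> VP'" using to_A' xs by auto
      then have "length xs \<le> k'" using dep unfolding depth_def by blast
      then show ?thesis by simp
    qed
  qed
  show ?thesis using valid depth by blast
qed


section \<open>Disjoint unions\<close>

lemma union_decomp:
  assumes fin: "finite I" and ne: "I \<noteq> {}"
    and val: "\<And>i. i \<in> I \<Longrightarrow> valid_decomp (Vs i) (restr E (Vs i)) (VP i) (A i) (org i)"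
    and dep: "\<And>i. i \<in> I \<Longrightarrow> depth (VP i) (A i) (k i)"
    and disj: "\<And>i j. i \<in> I \<Longrightarrow> j \<in> I \<Longrightarrow> i \<noteq> j \<Longrightarrow> VP i \<inter> VP j = {}"
    and closed: "\<And>i x u. i \<in> I \<Longrightarrow> x \<in> Vs i \<Longrightarrow> (x,u) \<in> E \<Longrightarrow> u \<in> Vs i"
    and cover: "(\<Union>i\<in>I. Vs i) = V"
  shows "\<exists>orgU. valid_decomp V E (\<Union>i\<in>I. VP i) (\<Union>i\<in>I. A i) orgU
     \<and> depth (\<Union>i\<in>I. VP i) (\<Union>i\<in>I. A i) (Max (k ` I))"
proof -
  define UP where "UP = (\<Union>i\<in>I. VP i)"
  define UA where "UA = (\<Union>i\<in>I. A i)"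
  define orgU where "orgU x = org (SOME i. i \<in> I \<and> x \<in> VP i) x" for x
  have dagi: "dag (VP i) (A i)" if "i \<in> I" for i using val[OF that] by (simp add: valid_decomp_def)
  have Asub: "A i \<subseteq> VP i \<times> VP i" if "i \<in> I" for i using dagi[OF that] by (simp add: dag_def)
  have surj: "org i ` VP i = Vs i" if "i \<in> I" for i using val[OF that] by (simp add: valid_decomp_def)
  have uniq: "i = j" if "i \<in> I" "j \<in> I" "x \<in> VP i" "x \<in> VP j" for i j x
    using disj that by blast
  have orgU_eq: "orgU x = org i x" if "i \<in> I" "x \<in> VP i" for i x
  proof -
    have "(SOME i. i \<in> I \<and> x \<in> VP i) = i"
      using uniq that by (metis (mono_tags, lifting) someI)
    then show ?thesis by (simp add: orgU_def)
  qed
  have arc_in: "(x,y) \<in> A i" if xy: "(x,y) \<in> UA" "i \<in> I" "x \<in> VP i" for x y i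
  proof -
    obtain j where "j \<in> I" "(x,y) \<in> A j" using xy(1) unfolding UA_def by blast
    moreover then have "x \<in> VP j" using Asub by blast
    ultimately show ?thesis using uniq xy by blast
  qed
  have to_i: "dpath (A i) xs \<and> set xs \<subseteq> VP i" if "dpath UA xs" "hd xs \<in> VP i" "i \<in> I" for xs i
    using that(1,2)
  proof (induction xs)
    case Nil then show ?case by (simp add: dpath_def)
  next
    case (Cons x xs)
    show ?case
    proof (cases xs)
      case Nil then show ?thesis using Cons by simp
    next
      case (Cons y ys)
      with Cons.prems have xy: "(x,y) \<in> UA" "dpath UA xs" by (auto simp: dpath_Cons)
      have "(x,y) \<in> A i" using arc_in xy Cons.prems that(3) by simp
      then have "y \<in> VP i" using Asub that(3) by blast
      then have "dpath (A i) xs \<and> set xs \<subseteq> VP i" using Cons.IH xy Cons by simp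
      then show ?thesis using Cons.prems \<open>(x,y) \<in> A i\<close> Cons by (auto simp: dpath_Cons)
    qed
  qed
  have acyc: "acyclic UA"
  proof -
    have "\<exists>i\<in>I. (x,y) \<in> (A i)\<^sup>+" if "(x,y) \<in> UA\<^sup>+" for x y
      using that
    proof (induction rule: trancl_induct)
      case (base y) then show ?case by (auto simp: UA_def)
    next
      case (step y z)
      then obtain i where i: "i \<in> I" "(x,y) \<in> (A i)\<^sup>+" by blast
      have "y \<in> VP i" using trancl_subset_Sigma[OF Asub[OF i(1)]] i(2) by blast
      then have "(y,z) \<in> A i" using arc_in step(2) i(1) by blast
      then show ?case using i by (meson trancl.trancl_into_trancl)
    qed
    then show ?thesis using dagi unfolding acyclic_def dag_def by blast
  qed
  have dag: "dag UP UA"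
    unfolding dag_def UP_def UA_def using fin dagi Asub acyc unfolding UA_def
    by (auto simp: dag_def)
  have valid: "valid_decomp V E UP UA orgU"
    unfolding valid_decomp_def
  proof (intro conjI ballI allI impI)
    show "dag UP UA" by fact
    have "orgU ` VP i = Vs i" if "i \<in> I" for i
      using surj[OF that] orgU_eq[OF that] by (metis image_cong)
    then show "orgU ` UP = V" using cover unfolding UP_def by (auto simp: image_UN)
  next
    fix v' u assume v'in: "v' \<in> UP" and e: "(orgU v', u) \<in> E"
    obtain i where i: "i \<in> I" "v' \<in> VP i" using v'in by (auto simp: UP_def)
    have oi: "orgU v' = org i v'" using orgU_eq i by blast
    have "org i v' \<in> Vs i" using surj i by blast
    then have "u \<in> Vs i" using closed i e oi by metis
    then have e': "(org i v', u) \<in> restr E (Vs i)" using e oi \<open>org i v' \<in> Vs i\<close> by (simp add: restr_def)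
    then have "(\<exists>u'\<in>VP i. org i u' = u \<and> descendant (A i) v' u') \<or>
      (\<forall>xs. dpath (A i) xs \<and> is_root (VP i) (A i) (hd xs) \<and> last xs = v' \<longrightarrow> (\<exists>u'\<in>set xs. org i u' = u))"
      using val[OF i(1)] i(2) by (simp add: valid_decomp_def)
    then show "(\<exists>u'\<in>UP. orgU u' = u \<and> descendant UA v' u') \<or>
       (\<forall>xs. dpath UA xs \<and> is_root UP UA (hd xs) \<and> last xs = v' \<longrightarrow> (\<exists>u'\<in>set xs. orgU u' = u))"
    proof
      assume "\<exists>u'\<in>VP i. org i u' = u \<and> descendant (A i) v' u'"
      then obtain u' where "u' \<in> VP i" "org i u' = u" "descendant (A i) v' u'" by blast
      moreover have "A i \<subseteq> UA" using i by (auto simp: UA_def)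
      ultimately have "u' \<in> UP" "orgU u' = u" "descendant UA v' u'"
        using orgU_eq[OF i(1)] descendant_mono[of "A i" UA] i unfolding UP_def by auto
      then show ?thesis by blast
    next
      assume H: "\<forall>xs. dpath (A i) xs \<and> is_root (VP i) (A i) (hd xs) \<and> last xs = v' \<longrightarrow> (\<exists>u'\<in>set xs. org i u' = u)"
      have "\<forall>xs. dpath UA xs \<and> is_root UP UA (hd xs) \<and> last xs = v' \<longrightarrow> (\<exists>u'\<in>set xs. orgU u' = u)"
      proof (intro allI impI)
        fix xs assume xs: "dpath UA xs \<and> is_root UP UA (hd xs) \<and> last xs = v'"
        then obtain j where j: "j \<in> I" "hd xs \<in> VP j" by (auto simp: is_root_def UP_def)
        then have p: "dpath (A j) xs" "set xs \<subseteq> VP j" using to_i xs by auto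
        have "xs \<noteq> []" using xs dpath_nonempty by auto
        then have "v' \<in> VP j" using p xs last_in_set by blast
        then have ji: "j = i" using uniq i j by blast
        have "is_root (VP i) (A i) (hd xs)" using xs j ji i unfolding is_root_def UA_def by auto
        then obtain u' where "u' \<in> set xs" "org i u' = u" using H xs p ji by blast
        then show "\<exists>u'\<in>set xs. orgU u' = u" using orgU_eq[OF i(1)] p ji by blast
      qed
      then show ?thesis ..
    qed
  qed
  have depth: "depth UP UA (Max (k ` I))"
    unfolding depth_def
  proof (intro conjI allI impI)
    have "Max (k ` I) \<in> k ` I" using fin ne by (intro Max_in) auto
    then obtain i where i: "i \<in> I" "k i = Max (k ` I)" by (metis imageE)
    obtain xs where xs: "dpath (A i) xs" "set xs \<subseteq> VP i" "length xs = k i"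
      using dep[OF i(1)] unfolding depth_def by blast
    have "dpath UA xs" using xs dpath_mono[of "A i" UA] i by (auto simp: UA_def)
    moreover have "set xs \<subseteq> UP" using xs i by (auto simp: UP_def)
    ultimately show "\<exists>xs. dpath UA xs \<and> set xs \<subseteq> UP \<and> length xs = Max (k ` I)"
      using xs i by auto
  next
    fix xs assume xs: "dpath UA xs \<and> set xs \<subseteq> UP"
    then have "xs \<noteq> []" using dpath_nonempty by auto
    then have "hd xs \<in> UP" using xs by (meson hd_in_set subsetD)
    then obtain i where i: "i \<in> I" "hd xs \<in> VP i" unfolding UP_def by blast
    then have "dpath (A i) xs" "set xs \<subseteq> VP i" using to_i xs by auto
    then have "length xs \<le> k i" using dep[OF i(1)] unfolding depth_def by blast
    also have "k i \<le> Max (k ` I)" using fin i by simp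
    finally show "length xs \<le> Max (k ` I)" .
  qed
  show ?thesis using valid depth unfolding UP_def UA_def by blast
qed


section \<open>Fragments\<close>

lemma frag_sub: "R \<in> fragments V E \<Longrightarrow> R \<subseteq> V \<and> R \<noteq> {}"
  by (auto simp: fragments_def rooted_in_def)

lemma frag_cover:
  assumes "finite V" "x \<in> V"
  shows "\<exists>R\<in>fragments V E. x \<in> R"
proof -
  let ?A = "{R. rooted_in V E R}"
  have "?A \<subseteq> Pow V" by (auto simp: rooted_in_def)
  then have fin: "finite ?A" using assms(1) by (meson finite_Pow_iff finite_subset)
  have "{x} \<in> ?A" using assms(2) by (auto simp: rooted_in_def)
  from finite_has_maximal2[OF fin this] obtain m where
    m: "m \<in> ?A" "{x} \<subseteq> m" "\<forall>b\<in>?A. m \<subseteq> b \<longrightarrow> m = b" by blast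
  then have "m \<in> fragments V E" by (auto simp: fragments_def)
  then show ?thesis using m by blast
qed

lemma frag_closed:
  assumes E: "E \<subseteq> V \<times> V" and R: "R \<in> fragments V E" and x: "x \<in> R" and e: "(x,u) \<in> E"
  shows "u \<in> R"
proof -
  from R obtain r where r: "r \<in> R" "\<forall>y\<in>R. (r, y) \<in> (restr E V)\<^sup>*" "R \<subseteq> V"
    and max: "\<forall>R'. rooted_in V E R' \<and> R \<subseteq> R' \<longrightarrow> R' = R"
    by (auto simp: fragments_def rooted_in_def)
  have "(x,u) \<in> restr E V" using E e by (auto simp: restr_def)
  then have "(r,u) \<in> (restr E V)\<^sup>*" using r x by (meson rtrancl.rtrancl_into_rtrancl)
  then have "rooted_in V E (insert u R)" using r E e unfolding rooted_in_def by auto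
  then have "insert u R = R" using max by blast
  then show ?thesis by blast
qed

lemma main:
  "finite V \<Longrightarrow> V \<noteq> {} \<Longrightarrow> E \<subseteq> V \<times> V \<Longrightarrow> inj (g :: nat \<Rightarrow> nat) \<Longrightarrow>
   \<exists>(VP :: nat set) A org. VP \<subseteq> range g \<and> valid_decomp V E VP A org \<and> depth VP A (ddp V E)"
proof (induction "card V" arbitrary: V E g rule: less_induct)
  case less
  note fin = less.prems(1) and neV = less.prems(2) and EV = less.prems(3) and inj = less.prems(4)
  show ?case
  proof (cases "card V = 1")
    case True
    then obtain v where V: "V = {v}" using card_1_singletonE by blast
    have ddp: "ddp V E = 1" using True fin neV by (subst ddp.simps, simp only: if_True if_False simp_thms)
    have nopath: "length xs \<le> 1" if "dpath {} xs" for xs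
    proof (rule ccontr)
      assume "\<not> length xs \<le> 1"
      then have "Suc 0 < length xs" by simp
      then have "(xs ! 0, xs ! Suc 0) \<in> {}" using that unfolding dpath_def by blast
      then show False by simp
    qed
    have val: "valid_decomp V E {g 0} {} (\<lambda>_. v)"
      unfolding valid_decomp_def
    proof (intro conjI ballI allI impI)
      show "dag {g 0} {}" by (simp add: dag_def acyclic_def)
      show "(\<lambda>_. v) ` {g 0} = V" using V by simp
    next
      fix v' u assume "v' \<in> {g 0}" "((\<lambda>_. v) v', u) \<in> E"
      then have "u = v" using EV V by auto
      then have uv: "u = v" .
      show "(\<exists>u'\<in>{g 0}. (\<lambda>_. v) u' = u \<and> descendant {} v' u') \<or>
        (\<forall>xs. dpath {} xs \<and> is_root {g 0} {} (hd xs) \<and> last xs = v' \<longrightarrow> (\<exists>u'\<in>set xs. (\<lambda>_. v) u' = u))"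
        by (rule disjI2) (use uv in \<open>metis dpath_nonempty list.set_sel(1)\<close>)
    qed
    have dep: "depth {g 0} {} 1"
      unfolding depth_def
    proof (intro conjI allI impI)
      show "\<exists>xs. dpath {} xs \<and> set xs \<subseteq> {g 0} \<and> length xs = 1" by (rule exI[of _ "[g 0]"]) simp
      fix xs assume "dpath {} xs \<and> set xs \<subseteq> {g 0}"
      then show "length xs \<le> 1" using nopath by blast
    qed
    have "{g 0} \<subseteq> range g" by auto
    then show ?thesis using val dep unfolding ddp by blast
  next
    case card_ne1: False
    have "card V > 0" using fin neV by auto
    then have c2: "card V \<ge> 2" using card_ne1 by linarith
    show ?thesis
    proof (cases "card (fragments V E) = 1")
      case True
      define f where "f v = ddp (V - {v}) (restr E (V - {v}))" for v
      have ddp: "ddp V E = 1 + Min (f ` V)"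
        using True fin neV card_ne1 unfolding f_def by (subst ddp.simps, simp only: if_True if_False simp_thms)
      have "Min (f ` V) \<in> f ` V" using fin neV by (intro Min_in) auto
      then obtain v where v: "v \<in> V" "f v = Min (f ` V)" by (metis imageE)
      define W where "W = V - {v}"
      have cW: "card W < card V" unfolding W_def by (rule card_Diff1_less[OF fin v(1)])
      have "card W = card V - 1" using v(1) fin unfolding W_def by simp
      then have neW: "W \<noteq> {}" using c2 by auto
      have EW: "restr E W \<subseteq> W \<times> W" by (auto simp: restr_def)
      have fW: "finite W" using fin unfolding W_def by simp
      have injS: "inj (g \<circ> Suc)" using inj by (simp add: inj_compose)
      obtain VP' A' org' where IH: "VP' \<subseteq> range (g \<circ> Suc)" "valid_decomp W (restr E W) VP' A' org'"
        "depth VP' A' (ddp W (restr E W))"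
        using less.hyps[OF cW fW neW EW injS] by blast
      have r: "g 0 \<notin> VP'" using IH(1) inj by (auto dest: injD)
      have Vi: "V = insert v W" using v(1) unfolding W_def by auto
      have vW: "v \<notin> W" unfolding W_def by simp
      have EV': "E \<subseteq> insert v W \<times> insert v W" using EV Vi by simp
      obtain A org where "valid_decomp (insert v W) E (insert (g 0) VP') A org"
        "depth (insert (g 0) VP') A (Suc (ddp W (restr E W)))"
        using add_root[OF IH(2) IH(3) r vW EV' refl] by blast
      then have AO: "valid_decomp V E (insert (g 0) VP') A org"
        "depth (insert (g 0) VP') A (Suc (ddp W (restr E W)))" using Vi by simp_all
      have "ddp W (restr E W) = f v" unfolding f_def W_def by (rule refl)
      then have "Suc (ddp W (restr E W)) = ddp V E" using ddp v(2) by simp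
      moreover have "insert (g 0) VP' \<subseteq> range g" using IH(1) by auto
      ultimately show ?thesis using AO by metis
    next
      case False
      define F where "F = fragments V E"
      have ddp: "ddp V E = Max ((\<lambda>R. ddp R (restr E R)) ` F)"
        using False fin neV card_ne1 unfolding F_def by (subst ddp.simps, simp only: if_True if_False simp_thms)
      have "F \<subseteq> Pow V" unfolding F_def using frag_sub by blast
      then have finF: "finite F" using fin by (meson finite_Pow_iff finite_subset)
      have coverF: "(\<Union>R\<in>F. R) = V"
      proof
        show "(\<Union>R\<in>F. R) \<subseteq> V" unfolding F_def using frag_sub by blast
        show "V \<subseteq> (\<Union>R\<in>F. R)"
        proof
          fix x assume "x \<in> V"
          then obtain R where "R \<in> fragments V E" "x \<in> R" using frag_cover[OF fin] by blast
          then show "x \<in> (\<Union>R\<in>F. R)" unfolding F_def by blast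
        qed
      qed
      then have neF: "F \<noteq> {}" using neV by auto
      obtain h where h: "bij_betw h {0..<card F} F" using ex_bij_betw_nat_finite[OF finF] by blast
      define c where "c = inv_into {0..<card F} h"
      have injc: "inj_on c F" unfolding c_def using h unfolding bij_betw_def by (intro inj_on_inv_into) simp
      have ch: "\<forall>R\<in>F. \<exists>VP A org. VP \<subseteq> range (g \<circ> (\<lambda>n. prod_encode (c R, n))) \<and>
          valid_decomp R (restr E R) VP A org \<and> depth VP A (ddp R (restr E R))"
      proof
        fix R assume R: "R \<in> F"
        have sub: "R \<subset> V" using fragment_proper[of R V E] R False unfolding F_def by blast
        have cR: "card R < card V" using sub fin by (simp add: psubset_card_mono)
        have fR: "finite R" using sub fin by (auto intro: finite_subset)
        have neR: "R \<noteq> {}" using frag_sub R unfolding F_def by blast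
        have ER: "restr E R \<subseteq> R \<times> R" by (auto simp: restr_def)
        have injR: "inj (g \<circ> (\<lambda>n. prod_encode (c R, n)))" using inj
          by (intro inj_compose) (auto simp: inj_def)
        show "\<exists>VP A org. VP \<subseteq> range (g \<circ> (\<lambda>n. prod_encode (c R, n))) \<and>
          valid_decomp R (restr E R) VP A org \<and> depth VP A (ddp R (restr E R))"
          using less.hyps[OF cR fR neR ER injR] by blast
      qed
      obtain VPf Af orgf where P: "\<And>R. R \<in> F \<Longrightarrow> VPf R \<subseteq> range (g \<circ> (\<lambda>n. prod_encode (c R, n))) \<and>
          valid_decomp R (restr E R) (VPf R) (Af R) (orgf R) \<and> depth (VPf R) (Af R) (ddp R (restr E R))"
      proof -
        assume H: "\<And>VPf Af orgf. (\<And>R. R \<in> F \<Longrightarrow> VPf R \<subseteq> range (g \<circ> (\<lambda>n. prod_encode (c R, n))) \<and>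
          valid_decomp R (restr E R) (VPf R) (Af R) (orgf R) \<and> depth (VPf R) (Af R) (ddp R (restr E R))) \<Longrightarrow> thesis"
        from bchoice[OF ch] obtain VPf where
          "\<forall>R\<in>F. \<exists>A org. VPf R \<subseteq> range (g \<circ> (\<lambda>n. prod_encode (c R, n))) \<and>
          valid_decomp R (restr E R) (VPf R) A org \<and> depth (VPf R) A (ddp R (restr E R))" by blast
        from bchoice[OF this] obtain Af where
          "\<forall>R\<in>F. \<exists>org. VPf R \<subseteq> range (g \<circ> (\<lambda>n. prod_encode (c R, n))) \<and>
          valid_decomp R (restr E R) (VPf R) (Af R) org \<and> depth (VPf R) (Af R) (ddp R (restr E R))" by blast
        from bchoice[OF this] obtain orgf where
          "\<forall>R\<in>F. VPf R \<subseteq> range (g \<circ> (\<lambda>n. prod_encode (c R, n))) \<and>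
          valid_decomp R (restr E R) (VPf R) (Af R) (orgf R) \<and> depth (VPf R) (Af R) (ddp R (restr E R))" by blast
        then show thesis using H by blast
      qed
      have disj: "VPf R \<inter> VPf R' = {}" if RR: "R \<in> F" "R' \<in> F" "R \<noteq> R'" for R R'
      proof -
        have "c R \<noteq> c R'" using injc RR by (meson inj_onD)
        show ?thesis
        proof (rule ccontr)
          assume "VPf R \<inter> VPf R' \<noteq> {}"
          then obtain x where x: "x \<in> VPf R" "x \<in> VPf R'" by blast
          obtain n where n: "x = g (prod_encode (c R, n))" using x(1) P[OF RR(1)] by auto
          obtain m where m: "x = g (prod_encode (c R', m))" using x(2) P[OF RR(2)] by auto
          have "prod_encode (c R, n) = prod_encode (c R', m)" using n m inj by (simp add: inj_eq)
          then show False using \<open>c R \<noteq> c R'\<close> by simp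
        qed
      qed
      have Pv: "valid_decomp R (restr E R) (VPf R) (Af R) (orgf R)" if "R \<in> F" for R using P[OF that] by blast
      have Pd: "depth (VPf R) (Af R) (ddp R (restr E R))" if "R \<in> F" for R using P[OF that] by blast
      have closed: "u \<in> R" if "R \<in> F" "x \<in> R" "(x,u) \<in> E" for R x u
        using frag_closed[OF EV] that unfolding F_def by blast
      obtain orgU where U: "valid_decomp V E (\<Union>R\<in>F. VPf R) (\<Union>R\<in>F. Af R) orgU"
        "depth (\<Union>R\<in>F. VPf R) (\<Union>R\<in>F. Af R) (Max ((\<lambda>R. ddp R (restr E R)) ` F))"
      proof -
        have "\<exists>orgU. valid_decomp V E (\<Union>R\<in>F. VPf R) (\<Union>R\<in>F. Af R) orgU \<and>
          depth (\<Union>R\<in>F. VPf R) (\<Union>R\<in>F. Af R) (Max ((\<lambda>R. ddp R (restr E R)) ` F))"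
          apply (rule union_decomp[of F "\<lambda>R. R" E VPf Af orgf "\<lambda>R. ddp R (restr E R)" V])
                apply (fact finF)
               apply (fact neF)
              apply (erule Pv)
             apply (erule Pd)
            apply (erule (2) disj)
           apply (erule (2) closed)
          apply (fact coverF)
          done
        then show ?thesis using that by blast
      qed
      have "VPf R \<subseteq> range g" if "R \<in> F" for R
      proof -
        have "VPf R \<subseteq> range (g \<circ> (\<lambda>n. prod_encode (c R, n)))" using P[OF that] by (rule conjunct1)
        then show ?thesis by auto
      qed
      then have "(\<Union>R\<in>F. VPf R) \<subseteq> range g" by blast
      then show ?thesis unfolding ddp using U by blast
    qed
  qed
qed

theorem theorem3p2:
  fixes V :: "'a set" and E :: "('a \<times> 'a) set" and k :: nat
  assumes "finite V" and "V \<noteq> {}" and "E \<subseteq> V \<times> V"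
    and "ddp V E = k"
  shows "\<exists>(VP :: nat set) A org. valid_decomp V E VP A org \<and> depth VP A k"
  using main[OF assms(1-3), of id] assms(4) by auto

end
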